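(* Fix $\mathbf{p}\in\mathbb{Z}^2\setminus\{\mathbf 0\}$ and $\mathbf a\in\mathbb{Z}^2$. For each positive integer $N$ large enough that $\mathbf a\in\mathcal D$, let $n$, $\rho_k$ and the $n\times n$ matrix $A'$ be as defined in the context (depending on $N$). Suppose that, for all sufficiently large $N$, $\rho_0<0$, $\rho_k\ge 0$ for all $k=1,2,\dots,n-1$, and $\rho_k=0$ for at most one $k\in\{1,\dots,n-1\}$. Then for all sufficiently large $N$, the matrix $A'$ has a non-zero real eigenvalue.
   Context: For a positive integer $N$ let $\mathcal D=[-N,N]^2\cap\mathbb{Z}^2$, and for $\mathbf k\in\mathbb{Z}^2$ let $\widehat{\mathbf k}$ denote the unique element of $\mathcal D$ with $\mathbf k-\widehat{\mathbf k}\in(2N+1)\mathbb{Z}^2$. For $\mathbf a\in\mathcal D$ the (Zeitlin) class is $\Sigma'_{\mathbf a}=\{\widehat{\mathbf a+k\mathbf p}:k\in\mathbb{Z}\}$ and $n=|\Sigma'_{\mathbf a}|$; one has $n=(2N+1)/\gcd(2N+1,\gcd(|p_1|,|p_2|))$, which is odd, and $\widehat{\mathbf a+k\mathbf p}$ depends only on $k$ modulo $n$. Assuming $\mathbf 0\notin\Sigma'_{\mathbf a}$, define $\rho_k=\frac{1}{|\mathbf p|^2}-\frac{1}{|\widehat{\mathbf a+k\mathbf p}|^2}$ for $k\in\mathbb{Z}$ (an $n$-periodic sequence). $A'$ is the $n\times n$ matrix with rows and columns indexed by $0,1,\dots,n-1$ (taken modulo $n$) whose entries are $(A')_{j,j+1}=\rho_{j+1}$,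 $(A')_{j,j-1}=-\rho_{j-1}$ (indices mod $n$), and all other entries $0$. (This is the linearisation, restricted to one class and up to the scalar factor $\frac{\Gamma}{\varepsilon}\sin(\varepsilon\,\mathbf a\times\mathbf p)$, $\varepsilon=2\pi/(2N+1)$, of Zeitlin's sine truncation of the 2D Euler equations about the equilibrium with Fourier coefficients $\Gamma$ at $\pm\mathbf p$ and $0$ elsewhere.) *)

theory Defs
  imports Complex_Main "Jordan_Normal_Form.Char_Poly"
begin

definition hatc :: "nat \<Rightarrow> int \<Rightarrow> int" where
  "hatc N x = (x + int N) mod (2 * int N + 1) - int N"

definition hat :: "nat \<Rightarrow> int \<times> int \<Rightarrow> int \<times> int" where
  "hat N k = (hatc N (fst k), hatc N (snd k))"

definition Dom :: "nat \<Rightarrow> (int \<times> int) set" where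
  "Dom N = {k. \<bar>fst k\<bar> \<le> int N \<and> \<bar>snd k\<bar> \<le> int N}"

definition shiftv :: "int \<times> int \<Rightarrow> int \<times> int \<Rightarrow> int \<Rightarrow> int \<times> int" where
  "shiftv a p k = (fst a + k * fst p, snd a + k * snd p)"

definition zcls :: "nat \<Rightarrow> int \<times> int \<Rightarrow> int \<times> int \<Rightarrow> (int \<times> int) set" where
  "zcls N a p = {hat N (shiftv a p k) | k. True}"

definition ncls :: "nat \<Rightarrow> int \<times> int \<Rightarrow> int \<times> int \<Rightarrow> nat" where
  "ncls N a p = card (zcls N a p)"

definition normsq :: "int \<times> int \<Rightarrow> real" where
  "normsq k = real_of_int (fst k ^ 2 + snd k ^ 2)"

definition rho :: "nat \<Rightarrow> int \<times> int \<Rightarrow> int \<times> int \<Rightarrow> int \<Rightarrow> real" where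
  "rho N a p k = 1 / normsq p - 1 / normsq (hat N (shiftv a p k))"

definition Aprime :: "nat \<Rightarrow> int \<times> int \<Rightarrow> int \<times> int \<Rightarrow> real mat" where
  "Aprime N a p = (let n = ncls N a p in
     mat n n (\<lambda>(i, j).
       if j = (i + 1) mod n then rho N a p (int i + 1)
       else if j = (i + n - 1) mod n then - rho N a p (int i - 1)
       else 0))"

end

theory Submission
  imports Defs
begin


definition nx :: "nat \<Rightarrow> nat \<Rightarrow> nat" where "nx n i = (if i+1 = n then 0 else i+1)"
definition pv :: "nat \<Rightarrow> nat \<Rightarrow> nat" where "pv n i = (if i = 0 then n-1 else i-1)"

lemma mod_nx: "i < n \<Longrightarrow> (i+1) mod n = nx n i"
  unfolding nx_def by (auto simp: mod_if)
lemma mod_pv: "i < n \<Longrightarrow> (i+n-1) mod n = pv n i"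
  unfolding pv_def by (auto simp: mod_if)

definition Cyc :: "nat \<Rightarrow> (nat \<Rightarrow> real) \<Rightarrow> real mat" where
 "Cyc n g = mat n n (\<lambda>(i,j). if j = nx n i then g j else if j = pv n i then - g j else 0)"

lemma tri_det:
  fixes B :: "real mat"
  shows "B \<in> carrier_mat (2*k) (2*k) \<Longrightarrow>
    (\<And>r c. r < 2*k \<Longrightarrow> c < 2*k \<Longrightarrow> B$$(r,c) = (if c = r+1 then h c else if r = c+1 then - h c else 0))
    \<Longrightarrow> det B = (\<Prod>r<2*k. h r)"
proof (induction k arbitrary: B h)
  case 0
  then show ?case by (simp add: det_def)
next
  case (Suc k)
  define n where "n = 2*k+2"
  have B: "B \<in> carrier_mat n n" using Suc.prems n_def by auto
  have Be: "\<And>r c. r < n \<Longrightarrow> c < n \<Longrightarrow> B$$(r,c) = (if c = r+1 then h c else if r = c+1 then - h c else 0)"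
    using Suc.prems n_def by auto
  define D1 where "D1 = mat_delete B 1 0"
  have D1: "D1 \<in> carrier_mat (n-1) (n-1)" unfolding D1_def using mat_delete_carrier[OF B] .
  have D1e: "\<And>r c. r < n-1 \<Longrightarrow> c < n-1 \<Longrightarrow> D1 $$ (r,c) = B $$ (if r < 1 then r else Suc r, Suc c)"
    unfolding D1_def mat_delete_def using B by auto
  define D2 where "D2 = mat_delete D1 0 0"
  have D2: "D2 \<in> carrier_mat (2*k) (2*k)" unfolding D2_def using mat_delete_carrier[OF D1] n_def by auto
  have D2e: "\<And>r c. r < 2*k \<Longrightarrow> c < 2*k \<Longrightarrow> D2 $$ (r,c) = B $$ (r+2, c+2)"
    unfolding D2_def mat_delete_def using D1 D1e n_def by auto
  have "det D2 = (\<Prod>r<2*k. h (r+2))"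
    apply (rule Suc.IH[OF D2])
    using D2e Be n_def by auto
  have "det B = (\<Sum>i<n. B $$ (i,0) * cofactor B i 0)"
    by (rule laplace_expansion_column[OF B], simp add: n_def)
  also have "\<dots> = B $$ (1,0) * cofactor B 1 0"
  proof -
    have "(\<Sum>i<n. B $$ (i,0) * cofactor B i 0) = (\<Sum>i\<in>{1}. B $$ (i,0) * cofactor B i 0)"
      by (rule sum.mono_neutral_right, auto simp: n_def Be)
    then show ?thesis by simp
  qed
  also have "cofactor B 1 0 = - det D1" unfolding cofactor_def D1_def by simp
  also have "det D1 = (\<Sum>j<n-1. D1 $$ (0,j) * cofactor D1 0 j)"
    by (rule laplace_expansion_row[OF D1], simp add: n_def)
  also have "\<dots> = D1 $$ (0,0) * cofactor D1 0 0"
  proof -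
    have "(\<Sum>j<n-1. D1 $$ (0,j) * cofactor D1 0 j) = (\<Sum>j\<in>{0}. D1 $$ (0,j) * cofactor D1 0 j)"
      by (rule sum.mono_neutral_right, auto simp: n_def Be D1e)
    then show ?thesis by simp
  qed
  also have "cofactor D1 0 0 = det D2" unfolding cofactor_def D2_def by simp
  finally have "det B = - (B $$ (1,0)) * (D1 $$ (0,0)) * det D2" by simp
  also have "B $$ (1,0) = - h 0" using Be n_def by simp
  also have "D1 $$ (0,0) = h 1" using Be D1e n_def by simp
  also note \<open>det D2 = (\<Prod>r<2*k. h (r+2))\<close>
  finally have "det B = h 0 * h 1 * (\<Prod>r<2*k. h (r+2))" by simp
  also have "\<dots> = (\<Prod>r<2*Suc k. h r)"
  proof -
    have "(\<Prod>r<2*Suc k. h r) = (\<Prod>r<Suc (Suc (2*k)). h r)" by simp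
    also have "\<dots> = h 0 * h 1 * (\<Prod>r<2*k. h (r+2))"
      unfolding prod.lessThan_Suc_shift by (simp add: mult.assoc)
    finally show ?thesis by simp
  qed
  finally show ?case .
qed

lemma det_perm_sym:
  fixes B :: "real mat"
  assumes B: "B \<in> carrier_mat m m" and p: "p permutes {0..<m}"
  shows "det (mat m m (\<lambda>(r,c). B $$ (p r, p c))) = det B"
proof -
  define C where "C = mat m m (\<lambda>(r,c). B $$ (p r, c))"
  have C: "C \<in> carrier_mat m m" unfolding C_def by simp
  have dC: "det C = signof p * det B" unfolding C_def by (rule det_permute_rows[OF B p])
  define E where "E = mat m m (\<lambda>(r,c). B $$ (p r, p c))"
  have E: "E \<in> carrier_mat m m" unfolding E_def by simp
  have pm: "\<And>x. x < m \<Longrightarrow> p x < m" using p permutes_in_image by fastforce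
  have ET: "transpose_mat E = mat m m (\<lambda>(r,c). transpose_mat C $$ (p r, c))"
    by (rule eq_matI, auto simp: E_def C_def pm)
  have "det E = det (transpose_mat E)" using det_transpose[OF E] by simp
  also have "\<dots> = signof p * det (transpose_mat C)"
    unfolding ET by (rule det_permute_rows[OF _ p], use C in auto)
  also have "\<dots> = signof p * (signof p * det B)" using det_transpose[OF C] dC by simp
  also have "\<dots> = det B"
  proof -
    have "real_of_int (signof p) * real_of_int (signof p) = 1"
      by (metis of_int_mult sign_idempotent of_int_1)
    then show ?thesis by (simp add: mult.assoc[symmetric])
  qed
  finally show ?thesis unfolding E_def .
qed

lemma Cyc_carrier[simp]: "Cyc n g \<in> carrier_mat n n" unfolding Cyc_def by simp

lemma Cyc_idx: "i < n \<Longrightarrow> j < n \<Longrightarrow> Cyc n g $$ (i,j) = (if j = nx n i then g j else if j = pv n i then - g j else 0)"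
  unfolding Cyc_def by simp

lemma minor_det:
  assumes n3: "3 \<le> n" and odd: "odd n" and i: "i < n"
  shows "det (mat_delete (Cyc n g) i i) = (\<Prod>l\<in>{..<n}-{i}. g l)"
proof -
  define m where "m = n - 1"
  define \<sigma> where "\<sigma> r = (if i+1+r < n then i+1+r else i+1+r-n)" for r
  have \<sigma>n: "\<And>r. r < m \<Longrightarrow> \<sigma> r < n" unfolding \<sigma>_def m_def using i by auto
  have nxe: "\<And>r c. r < m \<Longrightarrow> c < m \<Longrightarrow> (\<sigma> c = nx n (\<sigma> r)) = (c = r+1)"
    unfolding \<sigma>_def nx_def m_def using i n3 by auto
  have pve: "\<And>r c. r < m \<Longrightarrow> c < m \<Longrightarrow> (\<sigma> c = pv n (\<sigma> r)) = (r = c+1)"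
    unfolding \<sigma>_def pv_def m_def using i n3 by auto
  define B where "B = mat m m (\<lambda>(r,c). Cyc n g $$ (\<sigma> r, \<sigma> c))"
  have mk: "m = 2 * (m div 2)" using odd n3 unfolding m_def by auto
  have B: "B \<in> carrier_mat (2*(m div 2)) (2*(m div 2))" unfolding B_def using mk by simp
  have dB: "det B = (\<Prod>r<2*(m div 2). g (\<sigma> r))"
  proof (rule tri_det[OF B])
    fix r c assume "r < 2*(m div 2)" "c < 2*(m div 2)"
    then have rc: "r < m" "c < m" using mk by auto
    show "B $$ (r,c) = (if c = r+1 then g (\<sigma> c) else if r = c+1 then - g (\<sigma> c) else 0)"
      unfolding B_def using rc \<sigma>n nxe[OF rc(1,2)] pve[OF rc(1,2)] by (simp add: Cyc_idx)
  qed
  define \<pi> where "\<pi> r = (if r < i then r+n-1-i else if r < m then r - i else r)" for r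
  have perm: "\<pi> permutes {0..<m}"
  proof (rule bij_imp_permutes)
    show "bij_betw \<pi> {0..<m} {0..<m}"
      by (rule bij_betw_byWitness[where f'="\<lambda>s. if s < m - i then s + i else if s < m then s - (m-i) else s"],
          use i in \<open>auto simp: \<pi>_def m_def\<close>)
    show "\<And>x. x \<notin> {0..<m} \<Longrightarrow> \<pi> x = x" using i by (auto simp: \<pi>_def m_def)
  qed
  have del: "mat_delete (Cyc n g) i i = mat m m (\<lambda>(r,c). B $$ (\<pi> r, \<pi> c))"
  proof (rule eq_matI)
    fix r c assume rc: "r < dim_row (mat m m (\<lambda>(r,c). B $$ (\<pi> r, \<pi> c)))"
        "c < dim_col (mat m m (\<lambda>(r,c). B $$ (\<pi> r, \<pi> c)))"
    then have rc: "r < m" "c < m" by auto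
    have pr: "\<pi> r < m" "\<pi> c < m" using rc unfolding \<pi>_def m_def using i by auto
    have s: "\<And>x. x < m \<Longrightarrow> \<sigma> (\<pi> x) = (if x < i then x else Suc x)"
      unfolding \<sigma>_def \<pi>_def m_def using i by auto
    show "mat_delete (Cyc n g) i i $$ (r, c) = mat m m (\<lambda>(r,c). B $$ (\<pi> r, \<pi> c)) $$ (r, c)"
      using rc pr s[OF rc(1)] s[OF rc(2)] unfolding mat_delete_def B_def m_def by (simp add: Cyc_def)
  qed (auto simp: m_def mat_delete_def Cyc_def)
  have "det (mat_delete (Cyc n g) i i) = det B"
    unfolding del using det_perm_sym[OF _ perm, of B] B mk by simp
  also have "\<dots> = (\<Prod>r<m. g (\<sigma> r))" using dB mk by simp
  also have "\<dots> = (\<Prod>l\<in>{..<n}-{i}. g l)"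
  proof (rule prod.reindex_bij_betw)
    show "bij_betw \<sigma> {..<m} ({..<n} - {i})"
      by (rule bij_betw_byWitness[where f'="\<lambda>l. if l > i then l - i - 1 else l + n - i - 1"],
          use i in \<open>auto simp: \<sigma>_def m_def\<close>)
  qed
  finally show ?thesis .
qed


lemma poly_char_poly_0:
  fixes M :: "real mat"
  assumes M: "M \<in> carrier_mat m m" and ev: "even m"
  shows "poly (char_poly M) 0 = det M"
proof -
  have "poly (char_poly M) 0 = det (- (char_matrix M 0))" by (rule char_poly_matrix[OF M])
  also have "- (char_matrix M 0) = (-1) \<cdot>\<^sub>m M"
    by (rule eq_matI, use M in \<open>auto simp: char_matrix_def\<close>)
  also have "det \<dots> = det M" using M ev by simp
  finally show ?thesis .
qed

lemma cp_deriv0: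
  assumes n3: "3 \<le> n" and odd: "odd n"
  shows "poly (pderiv (char_poly (Cyc n g))) 0 = (\<Sum>i<n. \<Prod>l\<in>{..<n}-{i}. g l)"
proof -
  have "poly (pderiv (char_poly (Cyc n g))) 0 = (\<Sum>i<n. poly (char_poly (mat_delete (Cyc n g) i i)) 0)"
    unfolding pderiv_char_poly[OF Cyc_carrier] poly_sum ..
  also have "\<dots> = (\<Sum>i<n. det (mat_delete (Cyc n g) i i))"
    apply (rule sum.cong[OF refl])
    apply (rule poly_char_poly_0[OF mat_delete_carrier[OF Cyc_carrier]])
    using odd n3 by auto
  also have "\<dots> = (\<Sum>i<n. \<Prod>l\<in>{..<n}-{i}. g l)"
    by (rule sum.cong[OF refl], rule minor_det, use assms in auto)
  finally show ?thesis .
qed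

lemma cp0:
  assumes n3: "3 \<le> n"
  shows "poly (char_poly (Cyc n g)) 0 = 0"
proof -
  define A where "A = Cyc n g"
  have A: "A \<in> carrier_mat n n" unfolding A_def by simp
  have AT: "transpose_mat A \<in> carrier_mat n n" using A by simp
  define v where "v = vec n (\<lambda>_. 1::real)"
  have ev: "eigenvector (transpose_mat A) v 0"
    unfolding eigenvector_def
  proof (intro conjI)
    show "v \<in> carrier_vec (dim_row (transpose_mat A))" using A unfolding v_def by simp
    show "v \<noteq> 0\<^sub>v (dim_row (transpose_mat A))"
    proof
      assume "v = 0\<^sub>v (dim_row (transpose_mat A))"
      then have "v $ 0 = 0\<^sub>v n $ 0" using A by simp
      then show False using n3 unfolding v_def by simp
    qed
    show "transpose_mat A *\<^sub>v v = 0 \<cdot>\<^sub>v v"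
    proof (rule eq_vecI)
      fix l assume "l < dim_vec (0 \<cdot>\<^sub>v v)"
      then have l: "l < n" unfolding v_def by simp
      have iff1: "\<And>j. j < n \<Longrightarrow> (l = nx n j) = (j = pv n l)"
        unfolding nx_def pv_def using l n3 by auto
      have iff2: "\<And>j. j < n \<Longrightarrow> (l = pv n j) = (j = nx n l)"
        unfolding nx_def pv_def using l n3 by auto
      have ne: "pv n l \<noteq> nx n l" "pv n l < n" "nx n l < n" unfolding nx_def pv_def using l n3 by auto
      have "(transpose_mat A *\<^sub>v v) $ l = (\<Sum>j<n. A $$ (j,l))"
        using A l unfolding v_def by (simp add: scalar_prod_def lessThan_atLeast0)
      also have "\<dots> = (\<Sum>j<n. (if j = pv n l then g l else 0) + (if j = nx n l then - g l else 0))"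
        apply (rule sum.cong[OF refl])
        unfolding A_def using l ne iff1 iff2 by (auto simp: Cyc_idx)
      also have "\<dots> = 0" unfolding sum.distrib using ne by simp
      finally show "(transpose_mat A *\<^sub>v v) $ l = (0 \<cdot>\<^sub>v v) $ l" using l unfolding v_def by simp
    qed (use A v_def in simp)
  qed
  then have "eigenvalue (transpose_mat A) 0" unfolding eigenvalue_def by blast
  then have "poly (char_poly (transpose_mat A)) 0 = 0" using eigenvalue_root_char_poly[OF AT] by simp
  then show ?thesis using char_poly_transpose_mat[OF A] unfolding A_def by simp
qed

lemma alg:
  assumes n3: "3 \<le> n" and odd: "odd n" and neg: "(\<Sum>i<n. \<Prod>l\<in>{..<n}-{i}. g l) < 0"
  shows "\<exists>ev::real. ev \<noteq> 0 \<and> eigenvalue (Cyc n g) ev"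
proof -
  define P where "P = char_poly (Cyc n g)"
  have P0: "poly P 0 = 0" unfolding P_def by (rule cp0[OF n3])
  have D: "DERIV (poly P) 0 :> (\<Sum>i<n. \<Prod>l\<in>{..<n}-{i}. g l)"
    using poly_DERIV[of P 0] cp_deriv0[OF n3 odd, of g] unfolding P_def by simp
  obtain d where d: "d > 0" "\<And>h. h > 0 \<Longrightarrow> h < d \<Longrightarrow> poly P (0 + h) < poly P 0"
    using DERIV_neg_dec_right[OF D neg] by blast
  have e: "poly P (d/2) < 0" using d(2)[of "d/2"] d(1) P0 by simp
  have lc: "lead_coeff P = 1" using degree_monic_char_poly[OF Cyc_carrier, of n g] unfolding P_def by simp
  obtain R where R: "\<And>x. x \<ge> R \<Longrightarrow> poly P x \<ge> 1" using poly_pinfty_gt_lc[of P] lc by auto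
  define R' where "R' = max R d"
  have "poly P R' > 0" using R[of R'] unfolding R'_def by simp
  moreover have "d/2 < R'" unfolding R'_def using d(1) by simp
  ultimately obtain x where x: "d/2 < x" "x < R'" "poly P x = 0" using poly_IVT_pos[OF _ e] by blast
  have "eigenvalue (Cyc n g) x" using eigenvalue_root_char_poly[OF Cyc_carrier] x(3) unfolding P_def by simp
  moreover have "x \<noteq> 0" using x(1) d(1) by simp
  ultimately show ?thesis by blast
qed


lemma sign_sum:
  fixes g :: "nat \<Rightarrow> real"
  assumes n2: "2 \<le> n" and g0: "g 0 < 0" and nn: "\<And>l. 1 \<le> l \<Longrightarrow> l < n \<Longrightarrow> g l \<ge> 0"
    and ub: "\<And>l. 1 \<le> l \<Longrightarrow> l < n \<Longrightarrow> g l \<le> K"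
    and z: "card {l. 1 \<le> l \<and> l < n \<and> g l = 0} \<le> 1"
    and big: "real (n-1) * (- g 0) > K"
  shows "(\<Sum>i<n. \<Prod>l\<in>{..<n}-{i}. g l) < 0"
proof (cases "\<exists>l0. 1 \<le> l0 \<and> l0 < n \<and> g l0 = 0")
  case True
  then obtain l0 where l0: "1 \<le> l0" "l0 < n" "g l0 = 0" by blast
  have pos: "\<And>l. 1 \<le> l \<Longrightarrow> l < n \<Longrightarrow> l \<noteq> l0 \<Longrightarrow> g l > 0"
  proof (rule ccontr)
    fix l assume l: "1 \<le> l" "l < n" "l \<noteq> l0" "\<not> g l > 0"
    then have "g l = 0" using nn[OF l(1,2)] by simp
    then have "{l, l0} \<subseteq> {l. 1 \<le> l \<and> l < n \<and> g l = 0}" using l l0 by auto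
    moreover have "finite {l. 1 \<le> l \<and> l < n \<and> g l = 0}" by (rule finite_subset[of _ "{..<n}"], auto)
    ultimately have "card {l, l0} \<le> 1" using z card_mono order_trans by blast
    then show False using l(3) by simp
  qed
  have "(\<Sum>i<n. \<Prod>l\<in>{..<n}-{i}. g l) = (\<Sum>i\<in>{l0}. \<Prod>l\<in>{..<n}-{i}. g l)"
    apply (rule sum.mono_neutral_right)
    using l0 by (auto intro!: prod_zero)
  also have "\<dots> = (\<Prod>l\<in>{..<n}-{l0}. g l)" by simp
  also have "\<dots> = g 0 * (\<Prod>l\<in>{..<n}-{l0}-{0}. g l)"
    by (rule prod.remove, use l0 in auto)
  also have "\<dots> < 0"
    apply (rule mult_neg_pos[OF g0])
    apply (rule prod_pos)
    using pos by auto
  finally show ?thesis .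
next
  case False
  then have pos: "\<And>l. 1 \<le> l \<Longrightarrow> l < n \<Longrightarrow> g l > 0" using nn by force
  define P where "P = (\<Prod>l\<in>{1..<n}. g l)"
  have Pp: "P > 0" unfolding P_def by (rule prod_pos, use pos in auto)
  have K: "K > 0" using ub[of 1] pos[of 1] n2 by simp
  have eq0: "{..<n} - {0} = {1..<n}" by auto
  have trm: "(\<Prod>l\<in>{..<n}-{i}. g l) \<le> g 0 * P / K" if i: "i \<in> {1..<n}" for i
  proof -
    have a: "(\<Prod>l\<in>{..<n}-{i}. g l) = g 0 * (\<Prod>l\<in>{1..<n}-{i}. g l)"
    proof -
      have "{..<n}-{i} = insert 0 ({1..<n}-{i})" using i by auto
      then show ?thesis by simp
    qed
    have b: "P = g i * (\<Prod>l\<in>{1..<n}-{i}. g l)" unfolding P_def by (rule prod.remove, use i in auto)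
    have gi: "0 < g i" "g i \<le> K" using i pos ub by auto
    have Q: "(\<Prod>l\<in>{1..<n}-{i}. g l) \<ge> P / K"
    proof -
      have "P / K \<le> P / g i" using gi Pp by (simp add: frac_le)
      also have "P / g i = (\<Prod>l\<in>{1..<n}-{i}. g l)" using b gi by simp
      finally show ?thesis .
    qed
    have "g 0 * (\<Prod>l\<in>{1..<n}-{i}. g l) \<le> g 0 * (P / K)"
      using mult_left_mono_neg[OF Q, of "g 0"] g0 by simp
    then show ?thesis using a by simp
  qed
  have "(\<Sum>i<n. \<Prod>l\<in>{..<n}-{i}. g l) = (\<Prod>l\<in>{..<n}-{0}. g l) + (\<Sum>i\<in>{1..<n}. \<Prod>l\<in>{..<n}-{i}. g l)"
  proof -
    have "{..<n} = insert 0 {1..<n}" using n2 by auto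
    then show ?thesis by simp
  qed
  also have "(\<Prod>l\<in>{..<n}-{0}. g l) = P" unfolding P_def eq0 ..
  also have "(\<Sum>i\<in>{1..<n}. \<Prod>l\<in>{..<n}-{i}. g l) \<le> (\<Sum>i\<in>{1..<n}. g 0 * P / K)"
    by (rule sum_mono, rule trm)
  also have "(\<Sum>i\<in>{1..<n}. g 0 * P / K) = real (n-1) * g 0 * P / K" by simp
  finally have le: "(\<Sum>i<n. \<Prod>l\<in>{..<n}-{i}. g l) \<le> P + real (n-1) * g 0 * P / K" by simp
  have "real (n-1) * g 0 < - K" using big by simp
  then have "real (n-1) * g 0 * P < - K * P" using mult_strict_right_mono Pp by blast
  then have "real (n-1) * g 0 * P / K < - P" using K by (simp add: divide_less_eq mult.commute)
  then show ?thesis using le by simp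
qed



definition Hs :: "nat \<Rightarrow> int \<times> int \<Rightarrow> int \<Rightarrow> bool" where
  "Hs N p d \<longleftrightarrow> (2*int N+1) dvd d * fst p \<and> (2*int N+1) dvd d * snd p"

definition per :: "nat \<Rightarrow> int \<times> int \<Rightarrow> nat" where
  "per N p = (LEAST d::nat. 0 < d \<and> Hs N p (int d))"

lemma hatc_eq: "hatc N x = hatc N y \<longleftrightarrow> (2*int N+1) dvd (x - y)"
proof -
  have "hatc N x = hatc N y \<longleftrightarrow> (x + int N) mod (2*int N+1) = (y + int N) mod (2*int N+1)"
    unfolding hatc_def by simp
  also have "\<dots> \<longleftrightarrow> (2*int N+1) dvd (x + int N) - (y + int N)" by (rule mod_eq_dvd_iff)
  finally show ?thesis by simp
qed

lemma phi_eq: "hat N (shiftv a p k) = hat N (shiftv a p k') \<longleftrightarrow> Hs N p (k - k')"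
proof -
  have e1: "(fst a + k * fst p) - (fst a + k' * fst p) = (k - k') * fst p" by (simp add: algebra_simps)
  have e2: "(snd a + k * snd p) - (snd a + k' * snd p) = (k - k') * snd p" by (simp add: algebra_simps)
  show ?thesis unfolding hat_def shiftv_def Hs_def by (simp add: hatc_eq e1 e2 left_diff_distrib)
qed

lemma Hs_M: "Hs N p (2*int N+1)" unfolding Hs_def by simp

lemma Hs_mult: "Hs N p d \<Longrightarrow> Hs N p (c * d)" unfolding Hs_def
  by (metis dvd_mult mult.assoc)

lemma Hs_diff: "Hs N p d \<Longrightarrow> Hs N p e \<Longrightarrow> Hs N p (d - e)" unfolding Hs_def
  by (simp add: left_diff_distrib dvd_diff)

lemma per_props: "0 < per N p \<and> Hs N p (int (per N p))"
proof -
  have e: "int (2*N+1) = 2*int N+1" by simp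
  have "0 < (2*N+1) \<and> Hs N p (int (2*N+1))" unfolding e using Hs_M[of N p] by simp
  then show ?thesis unfolding per_def by (rule LeastI)
qed

lemma Hs_iff: "Hs N p d \<longleftrightarrow> int (per N p) dvd d"
proof
  assume "int (per N p) dvd d"
  then obtain c where "d = int (per N p) * c" by blast
  then show "Hs N p d" using Hs_mult[OF per_props[THEN conjunct2], where c=c] by (simp add: mult.commute)
next
  assume H: "Hs N p d"
  define P where "P = int (per N p)"
  have P: "0 < P" "Hs N p P" using per_props unfolding P_def by auto
  define r where "r = d mod P"
  have "r = d - (d div P) * P" unfolding r_def by (simp add: minus_div_mult_eq_mod)
  then have Hr: "Hs N p r" using Hs_diff[OF H Hs_mult[OF P(2)]] by simp
  have r: "0 \<le> r" "r < P" unfolding r_def using P by auto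
  show "int (per N p) dvd d"
  proof (rule ccontr)
    assume "\<not> int (per N p) dvd d"
    then have "r \<noteq> 0" unfolding r_def P_def by (simp add: dvd_eq_mod_eq_0)
    then have "0 < nat r \<and> Hs N p (int (nat r))" using Hr r by simp
    then have "per N p \<le> nat r" unfolding per_def by (rule Least_le)
    then show False using r unfolding P_def by simp
  qed
qed

lemma phi_mod: "hat N (shiftv a p k) = hat N (shiftv a p (k mod int (per N p)))"
  unfolding phi_eq Hs_iff by (simp add: mod_eq_dvd_iff[symmetric])

lemma rho_mod: "rho N a p k = rho N a p (k mod int (per N p))"
  unfolding rho_def using phi_mod by metis

lemma ncls_eq: "ncls N a p = per N p"
proof -
  define \<phi> where "\<phi> k = hat N (shiftv a p (int k))" for k
  have Z: "zcls N a p = \<phi> ` {0..<per N p}"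
  proof
    show "zcls N a p \<subseteq> \<phi> ` {0..<per N p}"
    proof
      fix x assume "x \<in> zcls N a p"
      then obtain k where k: "x = hat N (shiftv a p k)" unfolding zcls_def by blast
      have "x = \<phi> (nat (k mod int (per N p)))" unfolding k \<phi>_def using per_props[of N p]
        by (subst phi_mod, simp)
      moreover have "nat (k mod int (per N p)) \<in> {0..<per N p}" using per_props[of N p]
        by (simp add: nat_less_iff)
      ultimately show "x \<in> \<phi> ` {0..<per N p}" by blast
    qed
    show "\<phi> ` {0..<per N p} \<subseteq> zcls N a p" unfolding zcls_def \<phi>_def by blast
  qed
  have "inj_on \<phi> {0..<per N p}"
  proof
    fix i j assume ij: "i \<in> {0..<per N p}" "j \<in> {0..<per N p}" "\<phi> i = \<phi> j"
    then have d: "int (per N p) dvd int i - int j" unfolding \<phi>_def phi_eq Hs_iff by simp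
    show "i = j"
    proof (rule ccontr)
      assume "i \<noteq> j"
      then have "int i - int j \<noteq> 0" by simp
      then have "\<bar>int (per N p)\<bar> \<le> \<bar>int i - int j\<bar>" using dvd_imp_le_int d by blast
      then show False using ij by auto
    qed
  qed
  then show ?thesis unfolding ncls_def Z by (simp add: card_image)
qed

lemma per_odd: "odd (per N p)"
proof
  assume e: "even (per N p)"
  have d: "int (per N p) dvd 2*int N+1" using Hs_iff Hs_M by blast
  have "(2::int) dvd int (per N p)" using e by simp
  then have "(2::int) dvd 2*int N+1" using d dvd_trans by blast
  then show False by simp
qed

lemma per_lb:
  assumes "p \<noteq> (0,0)"
  shows "2*int N+1 \<le> int (per N p) * gcd (fst p) (snd p)"
proof -
  have H: "Hs N p (int (per N p))" using per_props by blast
  then have "(2*int N+1) dvd gcd (int (per N p) * fst p) (int (per N p) * snd p)"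
    unfolding Hs_def by simp
  then have d: "(2*int N+1) dvd int (per N p) * gcd (fst p) (snd p)"
    using gcd_mult_distrib_int[of "int (per N p)" "fst p" "snd p"] by simp
  have g: "gcd (fst p) (snd p) > 0" using assms by (cases p, auto)
  have "int (per N p) * gcd (fst p) (snd p) > 0" using g per_props[of N p] by simp
  then show ?thesis using d by (simp add: zdvd_imp_le)
qed



lemma hatc_id: "\<bar>x\<bar> \<le> int N \<Longrightarrow> hatc N x = x"
  unfolding hatc_def by simp

lemma mod_nx_int: "2 \<le> m \<Longrightarrow> i < m \<Longrightarrow> (int i + 1) mod int m = int (nx m i)"
proof (cases "i + 1 = m")
  case True
  then have e: "int i + 1 = int m" by simp
  show ?thesis unfolding nx_def e using True by simp
next
  case False
  assume "i < m"
  then have "int i + 1 < int m" "0 \<le> int i + 1" using False by auto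
  then show ?thesis using False unfolding nx_def by simp
qed

lemma mod_pv_int: "2 \<le> m \<Longrightarrow> i < m \<Longrightarrow> (int i - 1) mod int m = int (pv m i)"
proof (cases "i = 0")
  case True
  assume m: "2 \<le> m"
  have "(-1::int) mod int m = int m - 1" using m by (simp add: zmod_minus1)
  then show ?thesis using True m unfolding pv_def by simp
next
  case False
  assume "i < m"
  then have "int i - 1 < int m" "0 \<le> int i - 1" using False by auto
  then have "(int i - 1) mod int m = int i - 1" by simp
  then show ?thesis using False unfolding pv_def by (simp add: of_nat_diff)
qed

lemma Aprime_Cyc:
  assumes m2: "2 \<le> per N p"
  shows "Aprime N a p = Cyc (per N p) (\<lambda>l. rho N a p (int l))"
proof -
  define m where "m = per N p"
  have m: "2 \<le> m" using m2 m_def by simp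
  show ?thesis
    unfolding Aprime_def Let_def ncls_eq Cyc_def m_def[symmetric]
  proof (rule eq_matI)
    fix i j assume "i < dim_row (mat m m (\<lambda>(i, j). if j = nx m i then rho N a p (int j) else if j = pv m i then - rho N a p (int j) else 0))"
        "j < dim_col (mat m m (\<lambda>(i, j). if j = nx m i then rho N a p (int j) else if j = pv m i then - rho N a p (int j) else 0))"
    then have ij: "i < m" "j < m" by auto
    have r1: "rho N a p (int i + 1) = rho N a p (int (nx m i))"
      using rho_mod[of N a p "int i + 1"] mod_nx_int[OF m ij(1)] m_def by simp
    have r2: "rho N a p (int i - 1) = rho N a p (int (pv m i))"
      using rho_mod[of N a p "int i - 1"] mod_pv_int[OF m ij(1)] m_def by simp
    show "mat m m (\<lambda>(i, j). if j = (i + 1) mod m then rho N a p (int i + 1)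
            else if j = (i + m - 1) mod m then - rho N a p (int i - 1) else 0) $$ (i, j) =
          mat m m (\<lambda>(i, j). if j = nx m i then rho N a p (int j) else if j = pv m i then - rho N a p (int j) else 0) $$ (i, j)"
    proof -
      have "mat m m (\<lambda>(i, j). if j = (i + 1) mod m then rho N a p (int i + 1)
            else if j = (i + m - 1) mod m then - rho N a p (int i - 1) else 0) $$ (i, j)
        = (if j = (i + 1) mod m then rho N a p (int i + 1)
            else if j = (i + m - 1) mod m then - rho N a p (int i - 1) else 0)" using ij by simp
      also have "\<dots> = (if j = nx m i then rho N a p (int (nx m i))
            else if j = pv m i then - rho N a p (int (pv m i)) else 0)"
        unfolding mod_nx[OF ij(1)] mod_pv[OF ij(1)] r1 r2 ..
      also have "\<dots> = mat m m (\<lambda>(i, j). if j = nx m i then rho N a p (int j) else if j = pv m i then - rho N a p (int j) else 0) $$ (i, j)"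
        using ij by auto
      finally show ?thesis .
    qed
  qed auto
qed


theorem theorem1:
  fixes p a :: "int \<times> int"
  assumes "p \<noteq> (0, 0)"
    and "eventually (\<lambda>N.
           (0, 0) \<notin> zcls N a p \<and>
           rho N a p 0 < 0 \<and>
           (\<forall>k::int. 1 \<le> k \<and> k \<le> int (ncls N a p) - 1 \<longrightarrow> rho N a p k \<ge> 0) \<and>
           card {k::int. 1 \<le> k \<and> k \<le> int (ncls N a p) - 1 \<and> rho N a p k = 0} \<le> 1)
         sequentially"
  shows "eventually (\<lambda>N. \<exists>ev::real. ev \<noteq> 0 \<and> eigenvalue (Aprime N a p) ev) sequentially"
proof -
  obtain N0 where N0: "\<And>N. N \<ge> N0 \<Longrightarrow>
           rho N a p 0 < 0 \<and>
           (\<forall>k::int. 1 \<le> k \<and> k \<le> int (ncls N a p) - 1 \<longrightarrow> rho N a p k \<ge> 0) \<and>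
           card {k::int. 1 \<le> k \<and> k \<le> int (ncls N a p) - 1 \<and> rho N a p k = 0} \<le> 1"
    using assms(2) unfolding eventually_sequentially by blast
  define K where "K = 1 / normsq p"
  define r0 where "r0 = 1 / normsq p - 1 / normsq a"
  define Na where "Na = nat (max \<bar>fst a\<bar> \<bar>snd a\<bar>)"
  have rho0: "rho N a p 0 = r0" if "N \<ge> Na" for N
  proof -
    have "hat N a = a" unfolding hat_def using that unfolding Na_def
      by (cases a, auto simp: hatc_id)
    then show ?thesis unfolding rho_def r0_def shiftv_def by simp
  qed
  have r0: "r0 < 0" using N0[of "max N0 Na"] rho0[of "max N0 Na"] by simp
  define G where "G = gcd (fst p) (snd p)"
  have G: "G > 0" unfolding G_def using assms(1) by (cases p, auto)
  obtain N1 :: nat where N1: "real_of_int G * (K / (- r0) + 1) < real N1"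
    using reals_Archimedean2 by blast
  have ub0: "\<And>k. rho N a p k \<le> K" for N
  proof -
    fix k
    have "normsq (hat N (shiftv a p k)) \<ge> 0" unfolding normsq_def by simp
    then show "rho N a p k \<le> K" unfolding rho_def K_def by simp
  qed
  have K: "K > 0"
  proof -
    have "fst p \<noteq> 0 \<or> snd p \<noteq> 0" using assms(1) by (cases p, auto)
    then have "fst p ^ 2 + snd p ^ 2 > 0" by (auto simp: add_pos_nonneg add_nonneg_pos)
    then have "normsq p > 0" unfolding normsq_def by (simp only: of_int_0_less_iff)
    then show ?thesis unfolding K_def by simp
  qed
  show ?thesis unfolding eventually_sequentially
  proof (rule exI[of _ "max N0 (max Na N1)"], intro allI impI)
    fix N assume N: "max N0 (max Na N1) \<le> N"
    define m where "m = per N p"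
    define g where "g l = rho N a p (int l)" for l
    have Q: "rho N a p 0 < 0 \<and>
           (\<forall>k::int. 1 \<le> k \<and> k \<le> int (ncls N a p) - 1 \<longrightarrow> rho N a p k \<ge> 0) \<and>
           card {k::int. 1 \<le> k \<and> k \<le> int (ncls N a p) - 1 \<and> rho N a p k = 0} \<le> 1"
      using N0 N by simp
    have nc: "ncls N a p = m" unfolding m_def by (rule ncls_eq)
    have lb: "2*int N+1 \<le> int m * G" unfolding m_def G_def by (rule per_lb[OF assms(1)])
    have "real_of_int G * (K / (- r0) + 1) < real m * real_of_int G"
    proof -
      have "real N1 \<le> real N" using N by simp
      also have "real N < real_of_int (int m * G)" using lb by linarith
      also have "\<dots> = real m * real_of_int G" by simp
      finally show ?thesis using N1 by simp
    qed
    then have mb: "K / (- r0) + 1 < real m" using G by (simp add: mult.commute)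
    have Kr: "K / (- r0) > 0" using K r0 by (intro divide_pos_pos) auto
    have m1: "m \<ge> 1" using mb Kr by simp
    have big: "real (m - 1) * (- g 0) > K"
    proof -
      have "g 0 = r0" unfolding g_def using rho0 N by simp
      moreover have "K / (- r0) < real (m - 1)" using mb m1 by (simp add: of_nat_diff)
      moreover have "K / (- r0) < real (m - 1) \<longleftrightarrow> K < real (m - 1) * (- r0)"
        by (rule pos_divide_less_eq, use r0 in simp)
      ultimately show ?thesis by simp
    qed
    have m3: "3 \<le> m"
    proof -
      have "real m > 1" using mb Kr by simp
      then have "m \<ge> 2" by simp
      moreover have "odd m" unfolding m_def by (rule per_odd)
      ultimately show ?thesis by presburger
    qed
    have odd: "odd m" unfolding m_def by (rule per_odd)
    have nn: "\<And>l. 1 \<le> l \<Longrightarrow> l < m \<Longrightarrow> g l \<ge> 0" using Q nc unfolding g_def by auto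
    have z: "card {l. 1 \<le> l \<and> l < m \<and> g l = 0} \<le> 1"
    proof -
      define T where "T = {k::int. 1 \<le> k \<and> k \<le> int m - 1 \<and> rho N a p k = 0}"
      have T: "card T \<le> 1" using Q nc unfolding T_def by simp
      have fT: "finite T" unfolding T_def by (rule finite_subset[of _ "{1..int m - 1}"], auto)
      have "int ` {l. 1 \<le> l \<and> l < m \<and> g l = 0} \<subseteq> T" unfolding T_def g_def by auto
      then have "card (int ` {l. 1 \<le> l \<and> l < m \<and> g l = 0}) \<le> card T" using fT card_mono by blast
      then show ?thesis using T by (simp add: card_image)
    qed
    have g0: "g 0 < 0" using Q unfolding g_def by simp
    have ss: "(\<Sum>i<m. \<Prod>l\<in>{..<m}-{i}. g l) < 0"
      by (rule sign_sum[where K=K], use m3 g0 nn ub0 z big g_def in auto)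
    have eqg: "(\<lambda>l. rho N a p (int l)) = g" by (rule ext, simp add: g_def)
    have "2 \<le> per N p" using m3 m_def by simp
    then have "Aprime N a p = Cyc m g" using Aprime_Cyc[of N p a] unfolding m_def[symmetric] eqg by simp
    then show "\<exists>ev::real. ev \<noteq> 0 \<and> eigenvalue (Aprime N a p) ev" using alg[OF m3 odd ss] by simp
  qed
qed


end
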